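(* Consider the Histogram Partitioning algorithm (described in the context) on $N$ distinct keys over $p$ processors, where in round $j$ each key of $\gamma_j$ is sampled independently with probability $\frac{cp}{|\gamma_j|\log^* p}$ with $c=3\ln 2.5$. Let $t\ge 1$. If the number $k$ of unachieved splitters at the start of round $j$ satisfies $k\le\frac{p}{t\log^* p}$, then with high probability the number of unachieved splitters after round $j$ is at most $\max\left(\frac{p}{\log p\,\log^* p},\ \frac{p}{t\,2^t\log^* p}\right)$.
   Context: Setting: $N$ distinct keys from a totally ordered set are distributed across $p$ processors, $N/p$ keys per processor. For $\ell\in\{1,\dots,p-1\}$, the target range of splitter $\ell$ is the rank range $[\frac{N\ell}{p},\frac{N\ell}{p}+\frac{N}{p}]$; splitter $\ell$ is achieved in a round if some key with rank in this range is sampled in that round (and stays achieved afterwards). Histogram Partitioning proceeds in rounds; in round $j$, keys are sampled independently from a set $\gamma_j$ ($\gamma_1$ = all keys), and the global ranks of the samples are computed and made known to all processors. For each unachieved splitter $\ell$, $L_j(\ell)$ is the largest key sampled before round $j$ with rank below $\frac{N\ell}{p}$ (or the smallest key) and $U_j(\ell)$ the smallest key sampled before round $j$ with rank above $\frac{N\ell}{p}+\frac{N}{p}$ (or the largest key); $\gamma_j$ is the union over splitters $\ell$ unachieved before round $j$ of the keys between $L_j(\ell)$ and $U_j(\ell)$. $\log^* x=0$ for $x\le1$ and $\log^* x=1+\log^*(\log x)$ for $x>1$. "With high probability" means with probability tending to $1$ as $p\to\infty$ (the paper's bound is $1-e^{-p/(40\log p\log^* p)}$). *)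

theory Defs
  imports "HOL-Probability.Probability"
begin

text \<open>Keys are identified with their global ranks 1..N (distinct keys from a totally
ordered set; the algorithm only depends on the order).  A state of the algorithm before
a round is the set S of ranks of all keys sampled in previous rounds.\<close>

definition logstar :: "real \<Rightarrow> nat" where
  "logstar x = (LEAST n. ((\<lambda>y. log 2 y) ^^ n) x \<le> 1)"

definition tlo :: "nat \<Rightarrow> nat \<Rightarrow> nat \<Rightarrow> real" where
  "tlo N p l = real N * real l / real p"

definition thi :: "nat \<Rightarrow> nat \<Rightarrow> nat \<Rightarrow> real" where
  "thi N p l = real N * real l / real p + real N / real p"

definition achieved :: "nat \<Rightarrow> nat \<Rightarrow> nat set \<Rightarrow> nat \<Rightarrow> bool" where
  "achieved N p S l \<longleftrightarrow> (\<exists>x\<in>S. tlo N p l \<le> real x \<and> real x \<le> thi N p l)"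

definition unach :: "nat \<Rightarrow> nat \<Rightarrow> nat set \<Rightarrow> nat set" where
  "unach N p S = {l \<in> {1..p-1}. \<not> achieved N p S l}"

definition Lkey :: "nat \<Rightarrow> nat \<Rightarrow> nat set \<Rightarrow> nat \<Rightarrow> nat" where
  "Lkey N p S l = (if {x\<in>S. real x < tlo N p l} = {} then 1
                   else Max {x\<in>S. real x < tlo N p l})"

definition Ukey :: "nat \<Rightarrow> nat \<Rightarrow> nat set \<Rightarrow> nat \<Rightarrow> nat" where
  "Ukey N p S l = (if {x\<in>S. real x > thi N p l} = {} then N
                   else Min {x\<in>S. real x > thi N p l})"

definition gamma :: "nat \<Rightarrow> nat \<Rightarrow> nat set \<Rightarrow> nat set" where
  "gamma N p S = (\<Union>l\<in>unach N p S. {Lkey N p S l .. Ukey N p S l})"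

definition hp_c :: real where
  "hp_c = 3 * ln 2.5"

text \<open>Sampling probability of a round (capped at 1 so that it is a probability).\<close>
definition sprob :: "nat \<Rightarrow> nat \<Rightarrow> nat set \<Rightarrow> real" where
  "sprob N p S = min 1 (hp_c * real p / (real (card (gamma N p S)) * real (logstar (real p))))"

definition hp_round :: "nat \<Rightarrow> nat \<Rightarrow> nat set \<Rightarrow> nat set pmf" where
  "hp_round N p S =
     map_pmf (\<lambda>b. S \<union> {x \<in> gamma N p S. b x})
       (Pi_pmf (gamma N p S) False (\<lambda>_. bernoulli_pmf (sprob N p S)))"

text \<open>Distribution of the state after n rounds (= before round n+1); initially nothing sampled.\<close>
primrec hp_state :: "nat \<Rightarrow> nat \<Rightarrow> nat \<Rightarrow> nat set pmf" where
  "hp_state N p 0 = return_pmf {}"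
| "hp_state N p (Suc n) = hp_state N p n \<bind> hp_round N p"

definition hp_step :: "nat \<Rightarrow> nat \<Rightarrow> nat \<Rightarrow> (nat set \<times> nat set) pmf" where
  "hp_step N p j = hp_state N p (j - 1) \<bind> (\<lambda>S. map_pmf (\<lambda>S'. (S, S')) (hp_round N p S))"

end

theory Submission
  imports Defs "HOL-Real_Asymp.Real_Asymp"
begin


lemma tlo_eq: "0 < p \<Longrightarrow> tlo (m*p) p l = real (m*l)"
  by (simp add: tlo_def)
lemma thi_eq: "0 < p \<Longrightarrow> thi (m*p) p l = real (m*l+m)"
  by (simp add: thi_def)
lemma achieved_iff: "0 < p \<Longrightarrow> achieved (m*p) p S l \<longleftrightarrow> (\<exists>x\<in>S. m*l \<le> x \<and> x \<le> m*l+m)"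
  unfolding achieved_def tlo_eq thi_eq by (simp only: of_nat_le_iff)
lemma Lkey_eq: "0 < p \<Longrightarrow> Lkey (m*p) p S l = (if {x\<in>S. x < m*l} = {} then 1 else Max {x\<in>S. x < m*l})"
  unfolding Lkey_def tlo_eq by (simp only: of_nat_less_iff)
lemma Ukey_eq: "0 < p \<Longrightarrow> Ukey (m*p) p S l = (if {x\<in>S. x > m*l+m} = {} then m*p else Min {x\<in>S. x > m*l+m})"
  unfolding Ukey_def thi_eq by (simp only: of_nat_less_iff)

lemma unach_iff: "0 < p \<Longrightarrow> l \<in> unach (m*p) p S \<longleftrightarrow> 1 \<le> l \<and> l \<le> p - 1 \<and> (\<forall>x\<in>S. \<not> (m*l \<le> x \<and> x \<le> m*l+m))"
  unfolding unach_def using achieved_iff[of p m S l] by auto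




context
  fixes m p :: nat and S :: "nat set"
  assumes m1: "1 \<le> m" and p1: "1 \<le> p" and Ssub: "S \<subseteq> {1..m*p}"
begin

lemma finS: "finite S" using Ssub finite_subset by blast

lemma Lkey_ge1: "1 \<le> Lkey (m*p) p S l"
proof -
  have "0 < p" using p1 by simp
  show ?thesis
  proof (cases "{x\<in>S. x < m*l} = {}")
    case False
    have "Max {x\<in>S. x < m*l} \<in> {x\<in>S. x < m*l}" using False finS by (intro Max_in) auto
    then show ?thesis using Ssub Lkey_eq[OF \<open>0<p\<close>] False by auto
  qed (simp add: Lkey_eq[OF \<open>0<p\<close>])
qed

lemma Ukey_le: "Ukey (m*p) p S l \<le> m*p"
proof -
  have "0 < p" using p1 by simp
  show ?thesis
  proof (cases "{x\<in>S. x > m*l+m} = {}")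
    case False
    have "Min {x\<in>S. x > m*l+m} \<in> {x\<in>S. x > m*l+m}" using False finS by (intro Min_in) auto
    then show ?thesis using Ssub Ukey_eq[OF \<open>0<p\<close>] False by auto
  qed (simp add: Ukey_eq[OF \<open>0<p\<close>])
qed

lemma Lkey_max: "s \<in> S \<Longrightarrow> s < m*l \<Longrightarrow> s \<le> Lkey (m*p) p S l"
proof -
  assume s: "s \<in> S" "s < m*l"
  have "0 < p" using p1 by simp
  then have "Lkey (m*p) p S l = Max {x\<in>S. x < m*l}" using s by (auto simp: Lkey_eq)
  then show ?thesis using s finS by (auto intro: Max_ge)
qed

lemma Ukey_min: "s \<in> S \<Longrightarrow> s > m*l+m \<Longrightarrow> Ukey (m*p) p S l \<le> s"
proof -
  assume s: "s \<in> S" "s > m*l+m"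
  have "0 < p" using p1 by simp
  then have "Ukey (m*p) p S l = Min {x\<in>S. x > m*l+m}" using s by (auto simp: Ukey_eq)
  then show ?thesis using s finS by (auto intro: Min_le)
qed

lemma Lkey_le: "1 \<le> l \<Longrightarrow> Lkey (m*p) p S l \<le> m*l"
proof -
  assume l: "1 \<le> l"
  have "0 < p" using p1 by simp
  show ?thesis
  proof (cases "{x\<in>S. x < m*l} = {}")
    case False
    have "Max {x\<in>S. x < m*l} \<in> {x\<in>S. x < m*l}" using False finS by (intro Max_in) auto
    then show ?thesis using Lkey_eq[OF \<open>0<p\<close>] False by auto
  next
    case True
    have "1 \<le> m*l" using m1 l by simp
    then show ?thesis using True by (simp add: Lkey_eq[OF \<open>0<p\<close>])
  qed
qed

lemma Ukey_ge: "l \<le> p - 1 \<Longrightarrow> m*l+m \<le> Ukey (m*p) p S l"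
proof -
  assume l: "l \<le> p - 1"
  have "0 < p" using p1 by simp
  show ?thesis
  proof (cases "{x\<in>S. x > m*l+m} = {}")
    case False
    have "Min {x\<in>S. x > m*l+m} \<in> {x\<in>S. x > m*l+m}" using False finS by (intro Min_in) auto
    then show ?thesis using Ukey_eq[OF \<open>0<p\<close>] False by auto
  next
    case True
    have "l + 1 \<le> p" using l p1 by simp
    then have "m*(l+1) \<le> m*p" by (rule mult_le_mono2)
    then show ?thesis using True by (simp add: Ukey_eq[OF \<open>0<p\<close>] algebra_simps)
  qed
qed

lemma gamma_sub: "gamma (m*p) p S \<subseteq> {1..m*p}"
proof (unfold gamma_def, intro UN_least subsetI)
  fix l x assume "x \<in> {Lkey (m*p) p S l..Ukey (m*p) p S l}"
  then show "x \<in> {1..m*p}" using Lkey_ge1[of l] Ukey_le[of l] by auto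
qed

lemma finite_unach: "finite (unach (m*p) p S)"
  unfolding unach_def by simp

lemma finite_gamma: "finite (gamma (m*p) p S)"
  using gamma_sub finite_subset by blast

lemma T_sub: "l \<in> unach (m*p) p S \<Longrightarrow> {m*l..m*l+m} \<subseteq> gamma (m*p) p S"
proof -
  assume l: "l \<in> unach (m*p) p S"
  have "0 < p" using p1 by simp
  then have "1 \<le> l" "l \<le> p - 1" using l unach_iff by auto
  then have "{m*l..m*l+m} \<subseteq> {Lkey (m*p) p S l .. Ukey (m*p) p S l}"
    using Lkey_le Ukey_ge by force
  then show ?thesis using l unfolding gamma_def by blast
qed

lemma gamma_cover: "gamma (m*p) p S \<subseteq> (\<Union>l\<in>unach (m*p) p S. {m*(l-1)..m*(l+2)})"
proof (unfold gamma_def, intro UN_least subsetI)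
  fix l x assume l: "l \<in> unach (m*p) p S" and x: "x \<in> {Lkey (m*p) p S l..Ukey (m*p) p S l}"
  have p0: "0 < p" using p1 by simp
  have l1: "1 \<le> l" and lp: "l \<le> p - 1" and un: "\<forall>s\<in>S. \<not> (m*l \<le> s \<and> s \<le> m*l+m)"
    using l unach_iff[OF p0] by auto
  show "x \<in> (\<Union>l\<in>unach (m*p) p S. {m*(l-1)..m*(l+2)})"
  proof (cases "x < m*(l-1)")
    case True
    define l' where "l' = x div m + 1"
    have xlo: "m*(l'-1) \<le> x" unfolding l'_def by simp
    have xhi: "x < m*l'"
    proof -
      have "x mod m < m" using m1 by simp
      moreover have "m*(x div m) + x mod m = x" by (rule mult_div_mod_eq)
      ultimately show ?thesis unfolding l'_def distrib_left by linarith
    qed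
    have "x div m < l - 1" using True m1 by (simp add: div_less_iff_less_mult mult.commute)
    then have l'l: "l' + 1 \<le> l" unfolding l'_def by simp
    have "l' \<in> unach (m*p) p S"
    proof -
      have "\<not> (m*l' \<le> s \<and> s \<le> m*l'+m)" if s: "s \<in> S" for s
      proof
        assume h: "m*l' \<le> s \<and> s \<le> m*l'+m"
        have "m*l'+m = m*(l'+1)" by simp
        also have "\<dots> \<le> m*l" using l'l by (rule mult_le_mono2)
        finally have "s \<le> m*l" using h by simp
        show False
        proof (cases "s = m*l")
          case True then show False using un s by auto
        next
          case False
          then have "s < m*l" using \<open>s \<le> m*l\<close> by simp
          then have "s \<le> Lkey (m*p) p S l" using Lkey_max s by blast
          then show False using x xhi h by auto
        qed
      qed
      moreover have "1 \<le> l'" "l' \<le> p - 1" using l'l lp unfolding l'_def by auto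
      ultimately show ?thesis using unach_iff[OF p0] by auto
    qed
    moreover have "x \<le> m*(l'+2)" using xhi by (simp add: algebra_simps)
    ultimately show ?thesis using xlo by auto
  next
    case False
    note F1 = False
    show ?thesis
    proof (cases "x > m*(l+2)")
      case True
      note xbig = True
      define d where "d = (x - 1) div m"
      have d1: "m*d \<le> x - 1" unfolding d_def by (simp add: mult.commute)
      have d2: "x - 1 < m*(d+1)"
      proof -
        have "(x-1) mod m < m" using m1 by simp
        moreover have "m*((x-1) div m) + (x-1) mod m = x-1" by (rule mult_div_mod_eq)
        ultimately show ?thesis unfolding d_def distrib_left by linarith
      qed
      have "m*(l+2) \<le> x - 1" using True by simp
      then have "m*(l+2) < m*(d+1)" using d2 by simp
      then have "l + 2 < d + 1" by (simp only: mult_less_cancel1)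
      then have dl: "l + 2 \<le> d" by simp
      define l' where "l' = d - 1"
      have "l' \<in> unach (m*p) p S"
      proof -
        have "\<not> (m*l' \<le> s \<and> s \<le> m*l'+m)" if s: "s \<in> S" for s
        proof
          assume h: "m*l' \<le> s \<and> s \<le> m*l'+m"
          have "m*(l+1) \<le> m*l'" using dl unfolding l'_def by (intro mult_le_mono2) simp
          then have "m*l+m \<le> s" using h by (simp add: algebra_simps)
          show False
          proof (cases "s = m*l+m")
            case True then show False using un s by auto
          next
            case False
            then have "s > m*l+m" using \<open>m*l+m \<le> s\<close> by simp
            then have "Ukey (m*p) p S l \<le> s" using Ukey_min s by blast
            moreover have "m*l'+m = m*d" using dl unfolding l'_def
              by (cases d) (auto simp: algebra_simps)
            ultimately show False using x d1 h xbig by auto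
          qed
        qed
        moreover have "m*d < m*p"
        proof -
          have "x \<le> m*p" using x Ukey_le[of l] by simp
          moreover have "1 \<le> x" using xbig by simp
          ultimately show ?thesis using d1 by linarith
        qed
        then have "d < p" by simp
        then have "1 \<le> l'" "l' \<le> p - 1" using dl unfolding l'_def by auto
        ultimately show ?thesis using unach_iff[OF p0] by auto
      qed
      moreover have "m*(l'-1) \<le> x"
      proof -
        have "m*(l'-1) \<le> m*d" by (intro mult_le_mono2) (simp add: l'_def)
        then show ?thesis using d1 by linarith
      qed
      moreover have "x \<le> m*(l'+2)"
      proof -
        have "l' + 2 = d + 1" using dl unfolding l'_def by simp
        then show ?thesis using d2 by simp
      qed
      ultimately show ?thesis by auto
    next
      case False
      then have "m*(l-1) \<le> x" "x \<le> m*(l+2)" using F1 by auto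
      then show ?thesis using l by (intro UN_I[of l]) auto
    qed
  qed
qed

lemma card_gamma: "card (gamma (m*p) p S) \<le> card (unach (m*p) p S) * (3*m+1)"
proof -
  have "card (gamma (m*p) p S) \<le> card (\<Union>l\<in>unach (m*p) p S. {m*(l-1)..m*(l+2)})"
    using gamma_cover finite_unach by (intro card_mono) auto
  also have "\<dots> \<le> (\<Sum>l\<in>unach (m*p) p S. card {m*(l-1)..m*(l+2)})"
    using finite_unach by (rule card_UN_le)
  also have "\<dots> \<le> (\<Sum>l\<in>unach (m*p) p S. 3*m+1)"
  proof (intro sum_mono)
    fix l assume "l \<in> unach (m*p) p S"
    have "m*(l+2) + 1 - m*(l-1) \<le> 3*m+1"
      by (cases l) (auto simp: algebra_simps)
    then show "card {m*(l-1)..m*(l+2)} \<le> 3*m+1" by simp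
  qed
  also have "\<dots> = card (unach (m*p) p S) * (3*m+1)" by simp
  finally show ?thesis .
qed

lemma unach_after: "unach (m*p) p (S \<union> {x\<in>gamma (m*p) p S. b x}) =
   {l\<in>unach (m*p) p S. \<forall>x\<in>{m*l..m*l+m}. \<not> b x}"
proof -
  have p0: "0 < p" using p1 by simp
  show ?thesis
  proof (intro set_eqI iffI)
    fix l assume "l \<in> unach (m*p) p (S \<union> {x\<in>gamma (m*p) p S. b x})"
    then have "l \<in> unach (m*p) p S" "\<forall>x\<in>{m*l..m*l+m}. x \<in> gamma (m*p) p S \<longrightarrow> \<not> b x"
      using unach_iff[OF p0] by auto
    then show "l \<in> {l\<in>unach (m*p) p S. \<forall>x\<in>{m*l..m*l+m}. \<not> b x}" using T_sub by blast
  next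
    fix l assume "l \<in> {l\<in>unach (m*p) p S. \<forall>x\<in>{m*l..m*l+m}. \<not> b x}"
    then show "l \<in> unach (m*p) p (S \<union> {x\<in>gamma (m*p) p S. b x})"
      using unach_iff[OF p0] by auto
  qed
qed

end



context
  fixes G :: "nat set" and q :: real
  assumes finG: "finite G" and q0: "0 \<le> q" and q1: "q \<le> 1"
begin

definition PP :: "(nat \<Rightarrow> bool) pmf" where
  "PP = Pi_pmf G False (\<lambda>_. bernoulli_pmf q)"

lemma finite_set_PP: "finite (set_pmf PP)"
proof -
  have "set_pmf PP \<subseteq> PiE_dflt G False (\<lambda>_. UNIV)"
    using set_Pi_pmf_subset[OF finG, of False "\<lambda>_. bernoulli_pmf q"]
    unfolding PP_def PiE_dflt_def by auto
  moreover have "finite (PiE_dflt G False (\<lambda>_. (UNIV :: bool set)))"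
    using finG by (intro finite_PiE_dflt) auto
  ultimately show ?thesis using finite_subset by blast
qed

lemma integrable_PP: "integrable (measure_pmf PP) (f :: _ \<Rightarrow> real)"
  using finite_set_PP by (rule integrable_measure_pmf_finite)

lemma prod_of_bool_all: "finite A \<Longrightarrow> (\<Prod>x\<in>A. (of_bool (\<not> b x) :: real)) = of_bool (\<forall>x\<in>A. \<not> b x)"
  by (induction A rule: finite_induct) auto

lemma exp_none:
  assumes AG: "A \<subseteq> G"
  shows "measure_pmf.expectation PP (\<lambda>b. of_bool (\<forall>x\<in>A. \<not> b x) :: real) = (1 - q) ^ card A"
proof -
  have finA: "finite A" using AG finG finite_subset by blast
  define f where "f = (\<lambda>x (v::bool). if x \<in> A then (of_bool (\<not> v) :: real) else 1)"
  have eq: "(of_bool (\<forall>x\<in>A. \<not> b x) :: real) = (\<Prod>x\<in>G. f x (b x))" for b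
  proof -
    have "(\<Prod>x\<in>G. f x (b x)) = (\<Prod>x\<in>G \<inter> {x. x \<in> A}. of_bool (\<not> b x)) * (\<Prod>x\<in>G \<inter> - {x. x \<in> A}. 1)"
      unfolding f_def by (rule prod.If_cases[OF finG])
    also have "G \<inter> {x. x \<in> A} = A" using AG by auto
    finally show ?thesis using prod_of_bool_all[OF finA] by simp
  qed
  have "measure_pmf.expectation PP (\<lambda>b. of_bool (\<forall>x\<in>A. \<not> b x) :: real)
      = measure_pmf.expectation PP (\<lambda>b. \<Prod>x\<in>G. f x (b x))" by (simp only: eq)
  also have "\<dots> = (\<Prod>x\<in>G. measure_pmf.expectation (bernoulli_pmf q) (f x))"
    unfolding PP_def
    by (rule expectation_prod_Pi_pmf[OF finG])
       (auto simp: f_def intro!: integrable_measure_pmf_finite)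
  also have "\<dots> = (\<Prod>x\<in>G. if x \<in> A then 1 - q else 1)"
    using q0 q1 by (intro prod.cong) (auto simp: f_def)
  also have "\<dots> = (1 - q) ^ card A"
  proof -
    have "(\<Prod>x\<in>G. if x \<in> A then 1 - q else 1) = (\<Prod>x\<in>G \<inter> {x. x \<in> A}. 1 - q) * (\<Prod>x\<in>G \<inter> - {x. x \<in> A}. 1)"
      by (rule prod.If_cases[OF finG])
    also have "G \<inter> {x. x \<in> A} = A" using AG by auto
    finally show ?thesis by simp
  qed
  finally show ?thesis .
qed

lemma cheb_bound:
  fixes U :: "nat set" and T :: "nat \<Rightarrow> nat set" and n :: nat and a :: real
  assumes finU: "finite U"
    and TG: "\<And>l. l \<in> U \<Longrightarrow> T l \<subseteq> G"
    and cardT: "\<And>l. l \<in> U \<Longrightarrow> card (T l) = n"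
    and disj: "\<And>l l'. l \<in> U \<Longrightarrow> l' \<in> U \<Longrightarrow> l' \<notin> {l-1..l+1} \<Longrightarrow> T l \<inter> T l' = {}"
    and a0: "0 < a"
  shows "measure_pmf.prob PP {b. a \<le> \<bar>(\<Sum>l\<in>U. of_bool (\<forall>x\<in>T l. \<not> b x) :: real) - real (card U) * (1-q)^n\<bar>}
           \<le> 3 * real (card U) * (1-q)^n / a\<^sup>2"
proof -
  define X where "X = (\<lambda>b. (\<Sum>l\<in>U. of_bool (\<forall>x\<in>T l. \<not> b x) :: real))"
  define r where "r = (1-q)^n"
  have r0: "0 \<le> r" and r1: "r \<le> 1" unfolding r_def using q0 q1 by (auto intro: power_le_one)
  have EX: "measure_pmf.expectation PP X = real (card U) * r"
  proof -
    have "measure_pmf.expectation PP X = (\<Sum>l\<in>U. measure_pmf.expectation PP (\<lambda>b. of_bool (\<forall>x\<in>T l. \<not> b x) :: real))"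
      unfolding X_def by (rule Bochner_Integration.integral_sum) (rule integrable_PP)
    also have "\<dots> = (\<Sum>l\<in>U. r)"
      using exp_none TG cardT unfolding r_def by (intro sum.cong) auto
    finally show ?thesis by simp
  qed
  have X2: "(X b)\<^sup>2 = (\<Sum>l\<in>U. \<Sum>l'\<in>U. of_bool (\<forall>x\<in>T l \<union> T l'. \<not> b x) :: real)" for b
  proof -
    have "(X b)\<^sup>2 = (\<Sum>l\<in>U. \<Sum>l'\<in>U. of_bool (\<forall>x\<in>T l. \<not> b x) * (of_bool (\<forall>x\<in>T l'. \<not> b x) :: real))"
      unfolding X_def power2_eq_square by (rule sum_product)
    also have "\<dots> = (\<Sum>l\<in>U. \<Sum>l'\<in>U. of_bool (\<forall>x\<in>T l \<union> T l'. \<not> b x) :: real)"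
      by (intro sum.cong refl) auto
    finally show ?thesis .
  qed
  have pair: "measure_pmf.expectation PP (\<lambda>b. of_bool (\<forall>x\<in>T l \<union> T l'. \<not> b x) :: real)
       \<le> r\<^sup>2 + (if l' \<in> {l-1..l+1} then r else 0)" if l: "l \<in> U" "l' \<in> U" for l l'
  proof -
    have sub: "T l \<union> T l' \<subseteq> G" using TG l by auto
    have fin: "finite (T l)" "finite (T l')" using TG l finG finite_subset by blast+
    have e: "measure_pmf.expectation PP (\<lambda>b. of_bool (\<forall>x\<in>T l \<union> T l'. \<not> b x) :: real) = (1-q) ^ card (T l \<union> T l')"
      by (rule exp_none[OF sub])
    show ?thesis
    proof (cases "l' \<in> {l-1..l+1}")
      case True
      have "n \<le> card (T l \<union> T l')" using cardT[OF l(1)] fin by (metis card_mono finite_UnI sup_ge1)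
      then have h: "(1-q) ^ card (T l \<union> T l') \<le> r" unfolding r_def using q0 q1 by (intro power_decreasing) auto
      have "0 \<le> r\<^sup>2" by simp
      then have "(1-q) ^ card (T l \<union> T l') \<le> r\<^sup>2 + r" using h by linarith
      then show ?thesis using e True by simp
    next
      case False
      have "card (T l \<union> T l') = n + n" using disj[OF l False] fin cardT l by (simp add: card_Un_disjoint)
      then have "(1-q) ^ card (T l \<union> T l') = r\<^sup>2" unfolding r_def by (simp add: power_add power2_eq_square)
      then show ?thesis using e False by auto
    qed
  qed
  have EX2: "measure_pmf.expectation PP (\<lambda>b. (X b)\<^sup>2) \<le> (real (card U) * r)\<^sup>2 + 3 * real (card U) * r"
  proof -
    have "measure_pmf.expectation PP (\<lambda>b. (X b)\<^sup>2) =
        (\<Sum>l\<in>U. \<Sum>l'\<in>U. measure_pmf.expectation PP (\<lambda>b. of_bool (\<forall>x\<in>T l \<union> T l'. \<not> b x) :: real))"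
      unfolding X2
      by (subst Bochner_Integration.integral_sum, rule integrable_PP,
          subst Bochner_Integration.integral_sum, rule integrable_PP, rule refl)
    also have "\<dots> \<le> (\<Sum>l\<in>U. \<Sum>l'\<in>U. r\<^sup>2 + (if l' \<in> {l-1..l+1} then r else 0))"
      using pair by (intro sum_mono) auto
    also have "\<dots> = (\<Sum>l\<in>U. real (card U) * r\<^sup>2 + r * real (card (U \<inter> {l-1..l+1})))"
    proof (intro sum.cong refl)
      fix l assume "l \<in> U"
      have "(\<Sum>l'\<in>U. (if l' \<in> {l-1..l+1} then r else 0)) = (\<Sum>l'\<in>U. r * of_bool (l' \<in> {l-1..l+1}))"
        by (intro sum.cong) auto
      also have "\<dots> = r * (\<Sum>l'\<in>U. of_bool (l' \<in> {l-1..l+1}))" by (simp only: sum_distrib_left)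
      also have "(\<Sum>l'\<in>U. of_bool (l' \<in> {l-1..l+1})) = real (card (U \<inter> {l'. l' \<in> {l-1..l+1}}))"
        using finU by simp
      also have "{l'. l' \<in> {l-1..l+1}} = {l-1..l+1}" by auto
      finally show "(\<Sum>l'\<in>U. r\<^sup>2 + (if l' \<in> {l-1..l+1} then r else 0)) = real (card U) * r\<^sup>2 + r * real (card (U \<inter> {l-1..l+1}))"
        using finU by (simp add: sum.distrib)
    qed
    also have "\<dots> \<le> (\<Sum>l\<in>U. real (card U) * r\<^sup>2 + r * 3)"
    proof (intro sum_mono add_left_mono mult_left_mono r0)
      fix l :: nat
      have "card (U \<inter> {l-1..l+1}) \<le> card {l-1..l+1}" by (intro card_mono) auto
      also have "\<dots> \<le> 3" by simp
      finally show "real (card (U \<inter> {l-1..l+1})) \<le> 3" by simp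
    qed
    also have "\<dots> = (real (card U) * r)\<^sup>2 + 3 * real (card U) * r"
      by (simp add: power2_eq_square algebra_simps)
    finally show ?thesis .
  qed
  have var: "measure_pmf.variance PP X \<le> 3 * real (card U) * r"
    using EX2 EX by (subst measure_pmf.variance_eq) (auto intro: integrable_PP)
  have "measure_pmf.prob PP {b \<in> space (measure_pmf PP). a \<le> \<bar>X b - measure_pmf.expectation PP X\<bar>}
          \<le> measure_pmf.variance PP X / a\<^sup>2"
    by (rule measure_pmf.Chebyshev_inequality) (auto intro: integrable_PP a0)
  also have "\<dots> \<le> 3 * real (card U) * r / a\<^sup>2"
    using var a0 by (intro divide_right_mono) auto
  finally show ?thesis unfolding X_def r_def EX[unfolded X_def r_def] by simp
qed

end



lemma ln2_half: "1/2 \<le> ln (2::real)"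
proof -
  have "ln (1/2::real) \<le> 1/2 - 1" by (rule ln_le_minus_one) simp
  then show ?thesis by (simp add: ln_div)
qed

lemma log2_le_minus1: assumes "2 \<le> (y::real)" shows "log 2 y \<le> y - 1"
proof -
  have "ln y = ln 2 + ln (y/2)" using assms by (simp add: ln_div)
  also have "ln (y/2) \<le> y/2 - 1" using assms by (intro ln_le_minus_one) simp
  finally have "ln y \<le> ln 2 + (y/2 - 1)" by simp
  also have "\<dots> \<le> ln 2 + (y - 2) * ln 2"
  proof -
    have "(y - 2) * (1/2) \<le> (y - 2) * ln 2" using ln2_half assms by (intro mult_left_mono) auto
    then show ?thesis by simp
  qed
  also have "\<dots> = (y - 1) * ln 2" by (simp add: algebra_simps)
  finally have "ln y \<le> (y - 1) * ln 2" .
  then show ?thesis unfolding log_def by (simp add: divide_le_eq)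
qed

lemma iter_exists: "nat \<lceil>y\<rceil> \<le> K \<Longrightarrow> \<exists>n\<le>K. ((\<lambda>y. log 2 y) ^^ n) (y::real) \<le> 1"
proof (induction K arbitrary: y)
  case 0
  then have "y \<le> 0" by linarith
  then show ?case by (intro exI[of _ 0]) simp
next
  case (Suc K)
  show ?case
  proof (cases "y \<le> 1")
    case True then show ?thesis by (intro exI[of _ 0]) simp
  next
    case False
    show ?thesis
    proof (cases "y \<le> 2")
      case True
      have "log 2 y \<le> log 2 2" using True False by (subst log_le_cancel_iff) auto
      then show ?thesis by (intro exI[of _ 1]) simp
    next
      case False
      have "log 2 y \<le> y - 1" using False by (intro log2_le_minus1) simp
      then have "nat \<lceil>log 2 y\<rceil> \<le> K" using Suc.prems False
        by linarith
      then obtain n where n: "n \<le> K" "((\<lambda>y. log 2 y) ^^ n) (log 2 y) \<le> 1" using Suc.IH by blast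
      have "((\<lambda>y. log 2 y) ^^ Suc n) y = ((\<lambda>y. log 2 y) ^^ n) (log 2 y)"
        by (simp only: funpow_Suc_right o_def)
      then show ?thesis using n by (intro exI[of _ "Suc n"]) simp
    qed
  qed
qed

lemma logstar_bounds: assumes "2 \<le> x" shows "1 \<le> logstar x" "real (logstar x) \<le> log 2 x + 2"
proof -
  have lx: "1 \<le> log 2 x" using assms by (simp add: le_log_iff)
  obtain n where n: "n \<le> nat \<lceil>log 2 x\<rceil>" "((\<lambda>y. log 2 y) ^^ n) (log 2 x) \<le> 1"
    using iter_exists[of "log 2 x" "nat \<lceil>log 2 x\<rceil>"] by auto
  have P: "((\<lambda>y. log 2 y) ^^ Suc n) x \<le> 1"
    using n(2) by (simp only: funpow_Suc_right o_def)
  have "logstar x \<le> Suc n" unfolding logstar_def using P by (rule Least_le)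
  then have "real (logstar x) \<le> real n + 1" by simp
  also have "real n \<le> log 2 x + 1" using n(1) lx by linarith
  finally show "real (logstar x) \<le> log 2 x + 2" by simp
  have "((\<lambda>y. log 2 y) ^^ logstar x) x \<le> 1" unfolding logstar_def using P by (rule LeastI)
  then show "1 \<le> logstar x" using assms by (cases "logstar x") auto
qed

lemma prob_UNIV_pmf: "measure_pmf.prob M UNIV = 1"
  using measure_pmf.prob_space[of M] by simp

lemma prob_bind_ge:
  assumes "\<And>x. x \<in> set_pmf M \<Longrightarrow> c \<le> measure_pmf.prob (K x) E"
  shows "c \<le> measure_pmf.prob (bind_pmf M K) E"
proof (cases "c \<le> 0")
  case True then show ?thesis by (meson measure_nonneg order_trans)
next
  case False
  have "ennreal c \<le> (\<integral>\<^sup>+x. emeasure (K x) E \<partial>M)"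
  proof (rule measure_pmf.nn_integral_ge_const, rule AE_pmfI)
    fix x assume "x \<in> set_pmf M"
    then have "c \<le> measure_pmf.prob (K x) E" by (rule assms)
    then show "ennreal c \<le> emeasure (K x) E" by (simp add: measure_pmf.emeasure_eq_measure)
  qed
  also have "\<dots> = emeasure (bind_pmf M K) E" by simp
  also have "\<dots> = ennreal (measure_pmf.prob (bind_pmf M K) E)" by (simp add: measure_pmf.emeasure_eq_measure)
  finally show ?thesis using False by (simp add: ennreal_le_iff)
qed

lemma state_support: "1 \<le> m \<Longrightarrow> 1 \<le> p \<Longrightarrow> S \<in> set_pmf (hp_state (m*p) p n) \<Longrightarrow> S \<subseteq> {1..m*p}"
proof (induction n arbitrary: S)
  case 0 then show ?case by simp
next
  case (Suc n)
  then obtain S0 where S0: "S0 \<in> set_pmf (hp_state (m*p) p n)" "S \<in> set_pmf (hp_round (m*p) p S0)" by auto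
  then have S0sub: "S0 \<subseteq> {1..m*p}" using Suc by blast
  obtain b where "S = S0 \<union> {x \<in> gamma (m*p) p S0. b x}" using S0(2) unfolding hp_round_def by auto
  then show ?case using S0sub gamma_sub[OF Suc.prems(1,2) S0sub] by auto
qed

lemma lim_f: "(\<lambda>p::nat. 1 - 60 * log 2 (real p) * (log 2 (real p) + 2) / real p) \<longlonglongrightarrow> 1"
  by real_asymp




lemma hp_c_eq: "hp_c = 3 * ln (5/2)" by (simp add: hp_c_def)
lemma hp_c_pos: "0 < hp_c" by (simp add: hp_c_eq)

lemma r_bound:
  fixes m :: nat and k g p t L q :: real
  assumes m1: "1 \<le> m" and g0: "0 < g" and gk: "g \<le> k * (3 * real m + 1)" and k0: "0 < k"
    and kp: "k \<le> p / (t * L)" and L1: "1 \<le> L" and t1: "1 \<le> t" and p0: "0 < p"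
    and qdef: "q = min 1 (hp_c * p / (g * L))"
  shows "(1 - q) ^ (m + 1) \<le> 0.8 / 2 powr t"
proof (cases "1 \<le> hp_c * p / (g * L)")
  case True
  then have "q = 1" using qdef by simp
  then show ?thesis by simp
next
  case False
  then have q: "q = hp_c * p / (g * L)" using qdef by simp
  have q0: "0 \<le> q" unfolding q using hp_c_pos p0 g0 L1 by simp
  have q1: "q \<le> 1" using False q by simp
  have ktL: "k * t * L \<le> p" using kp t1 L1 by (simp add: le_divide_eq mult.assoc)
  have "t * g * L \<le> t * (k * (3 * real m + 1)) * L"
    using gk t1 L1 by (intro mult_right_mono mult_left_mono) auto
  also have "\<dots> = (3 * real m + 1) * (k * t * L)" by (simp add: algebra_simps)
  also have "\<dots> \<le> (3 * real m + 1) * p" using ktL by (intro mult_left_mono) auto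
  finally have tgL: "t * g * L \<le> (3 * real m + 1) * p" .
  have qlow: "hp_c * t / (3 * real m + 1) \<le> q"
  proof -
    have d0: "0 < 3 * real m + 1" by simp
    have gL0: "0 < g * L" using g0 L1 by simp
    have "t*g*L/(3 * real m + 1) \<le> p" using tgL d0 by (simp add: pos_divide_le_eq mult.commute)
    then have "hp_c*(t*g*L/(3 * real m + 1)) \<le> hp_c*p" using hp_c_pos by (intro mult_left_mono) auto
    moreover have "hp_c*t/(3 * real m + 1)*(g*L) = hp_c*(t*g*L/(3 * real m + 1))" by (simp add: field_simps)
    ultimately have "hp_c*t/(3 * real m + 1)*(g*L) \<le> hp_c*p" by simp
    then show ?thesis unfolding q using gL0 by (simp add: pos_le_divide_eq mult.assoc)
  qed
  have "(1 - q) ^ (m + 1) \<le> exp (-q) ^ (m + 1)"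
    using q1 by (intro power_mono) (auto simp: exp_ge_add_one_self[of "-q", simplified])
  also have "\<dots> = exp (- (q * real (m + 1)))"
    by (subst exp_of_nat_mult[symmetric]) (simp add: mult.commute)
  also have "\<dots> \<le> exp (- (t * ln (5/2)))"
  proof -
    have "hp_c * t / 3 \<le> hp_c * t / (3 * real m + 1) * real (m + 1)"
      using hp_c_pos t1 by (simp add: field_simps)
    also have "\<dots> \<le> q * real (m + 1)" using qlow by (intro mult_right_mono) auto
    finally show ?thesis by (simp add: hp_c_eq mult.commute)
  qed
  also have "exp (- (t * ln (5/2))) = 1 / (5/2) powr t"
    by (simp add: powr_def exp_minus field_simps)
  also have "\<dots> \<le> 0.8 / 2 powr t"
  proof -
    have "(5/2::real) powr t = 2 powr t * (5/4) powr t" by (simp add: powr_mult[symmetric])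
    moreover have "(5/4::real) powr 1 \<le> (5/4) powr t" using t1 by (intro powr_mono) auto
    ultimately have "2 powr t * (5/4) \<le> (5/2::real) powr t" by simp
    then show ?thesis by (simp add: field_simps)
  qed
  finally show ?thesis .
qed


lemma round_bound:
  fixes m p :: nat and S :: "nat set" and t B :: real
  assumes m1: "1 \<le> m" and p2: "2 \<le> p" and Ssub: "S \<subseteq> {1..m*p}" and t1: "1 \<le> t"
    and Bdef: "B = max (real p / (log 2 (real p) * real (logstar (real p)))) (real p / (t * 2 powr t * real (logstar (real p))))"
  shows "1 - 60 / B \<le> measure_pmf.prob (hp_round (m*p) p S)
           {S'. real (card (unach (m*p) p S)) \<le> real p / (t * real (logstar (real p))) \<longrightarrow>
                real (card (unach (m*p) p S')) \<le> B}"
proof -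
  define L where "L = real (logstar (real p))"
  have L1: "1 \<le> L" using logstar_bounds(1)[of "real p"] p2 unfolding L_def by simp
  have p1: "1 \<le> p" using p2 by simp
  have lp: "1 \<le> log 2 (real p)" using p2 by (simp add: le_log_iff)
  have Bge: "real p / (log 2 (real p) * L) \<le> B" unfolding Bdef L_def by simp
  have "0 < real p / (log 2 (real p) * L)" using p2 lp L1 by (intro divide_pos_pos mult_pos_pos) auto
  then have B0: "0 < B" using Bge by linarith
  have Bge2: "real p / (t * 2 powr t * L) \<le> B" unfolding Bdef L_def by simp
  define U where "U = unach (m*p) p S"
  define G where "G = gamma (m*p) p S"
  define q where "q = sprob (m*p) p S"
  define T where "T = (\<lambda>l::nat. {m*l..m*l+m})"
  have finU: "finite U" unfolding U_def by (rule finite_unach[OF m1 p1 Ssub])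
  have finG: "finite G" unfolding G_def by (rule finite_gamma[OF m1 p1 Ssub])
  have qdef: "q = min 1 (hp_c * real p / (real (card G) * L))" unfolding q_def sprob_def G_def L_def by simp
  have q0: "0 \<le> q" unfolding qdef using hp_c_pos L1 by auto
  have q1: "q \<le> 1" unfolding qdef by simp
  have round: "hp_round (m*p) p S = map_pmf (\<lambda>b. S \<union> {x\<in>G. b x}) (PP G q)"
    unfolding hp_round_def PP_def[OF finG q0 q1] unfolding G_def q_def by simp
  have after: "card (unach (m*p) p (S \<union> {x\<in>G. b x})) = card {l\<in>U. \<forall>x\<in>T l. \<not> b x}" for b
    using unach_after[OF m1 p1 Ssub, of b] unfolding U_def G_def T_def by simp
  define E where "E = {b. real (card U) \<le> real p/(t*L) \<longrightarrow> real (card {l\<in>U. \<forall>x\<in>T l. \<not> b x}) \<le> B}"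
  have probE: "measure_pmf.prob (hp_round (m*p) p S)
           {S'. real (card (unach (m*p) p S)) \<le> real p / (t * real (logstar (real p))) \<longrightarrow>
                real (card (unach (m*p) p S')) \<le> B} = measure_pmf.prob (PP G q) E"
    unfolding round E_def by (simp add: after vimage_def U_def L_def)
  have "1 - 60 / B \<le> measure_pmf.prob (PP G q) E"
  proof (cases "real (card U) \<le> real p/(t*L) \<and> card U > 0")
    case False
    have "E = UNIV"
    proof -
      have "real (card {l\<in>U. \<forall>x\<in>T l. \<not> b x}) \<le> B" if "card U = 0" for b
      proof -
        have "card {l\<in>U. \<forall>x\<in>T l. \<not> b x} \<le> card U" using finU by (intro card_mono) auto
        then show ?thesis using that B0 by simp
      qed
      then show ?thesis using False unfolding E_def by auto
    qed
    then show ?thesis using B0 by (simp add: prob_UNIV_pmf)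
  next
    case True
    then have kp: "real (card U) \<le> real p/(t*L)" and k0: "0 < card U" by auto
    have "U \<noteq> {}" using k0 by auto
    then obtain l0 where l0: "l0 \<in> U" by blast
    have TG: "T l \<subseteq> G" if "l \<in> U" for l using T_sub[OF m1 p1 Ssub, of l] that unfolding T_def U_def G_def by simp
    have cardT: "card (T l) = m + 1" for l unfolding T_def by simp
    have "m + 1 \<le> card G" using card_mono[OF finG TG[OF l0]] cardT[of l0] by simp
    then have g0: "0 < real (card G)" by simp
    have gk: "real (card G) \<le> real (card U) * (3 * real m + 1)"
    proof -
      have "card G \<le> card U * (3*m+1)" using card_gamma[OF m1 p1 Ssub] unfolding G_def U_def .
      then have "real (card G) \<le> real (card U * (3*m+1))" by (simp only: of_nat_le_iff)
      then show ?thesis by (simp add: algebra_simps)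
    qed
    define r where "r = (1 - q) ^ (m + 1)"
    have r0: "0 \<le> r" unfolding r_def using q1 by simp
    have rb: "r \<le> 0.8 / 2 powr t" unfolding r_def
      using r_bound[OF m1 g0 gk _ kp L1 t1 _ qdef] k0 p1 by simp
    have kr: "real (card U) * r \<le> 0.8 * B"
    proof -
      have "real (card U) * r \<le> real (card U) * (0.8 / 2 powr t)" using rb by (intro mult_left_mono) auto
      also have "\<dots> \<le> real p/(t*L) * (0.8 / 2 powr t)" using kp by (intro mult_right_mono) auto
      also have "\<dots> = 0.8 * (real p / (t * 2 powr t * L))" by (simp add: field_simps)
      also have "\<dots> \<le> 0.8 * B" using Bge2 by (intro mult_left_mono) auto
      finally show ?thesis .
    qed
    have disj: "T l \<inter> T l' = {}" if "l \<in> U" "l' \<in> U" "l' \<notin> {l-1..l+1}" for l l'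
    proof (rule ccontr)
      assume "T l \<inter> T l' \<noteq> {}"
      then obtain x where "x \<in> T l \<inter> T l'" by blast
      then have x: "m*l \<le> x" "x \<le> m*l+m" "m*l' \<le> x" "x \<le> m*l'+m" unfolding T_def by auto
      have a1: "m*l \<le> m*(l'+1)" using x by simp
      have "l \<le> l'+1" using mult_le_cancel1[of m l "l'+1"] a1 m1 by simp
      moreover have a2: "m*l' \<le> m*(l+1)" using x by simp
      have "l' \<le> l+1" using mult_le_cancel1[of m l' "l+1"] a2 m1 by simp
      ultimately show False using that(3) by auto
    qed
    define a where "a = B / 5"
    have a0: "0 < a" unfolding a_def using B0 by simp
    have cheb: "measure_pmf.prob (PP G q) {b. a \<le> \<bar>(\<Sum>l\<in>U. of_bool (\<forall>x\<in>T l. \<not> b x) :: real) - real (card U) * r\<bar>}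
           \<le> 3 * real (card U) * r / a\<^sup>2"
      unfolding r_def
      by (rule cheb_bound[OF finG q0 q1 finU TG cardT disj a0])
    also have "\<dots> \<le> 60 / B"
    proof -
      have "3 * real (card U) * r / a\<^sup>2 = 75 * (real (card U) * r) / B\<^sup>2" unfolding a_def by (simp add: power2_eq_square field_simps)
      also have "\<dots> \<le> 75 * (0.8 * B) / B\<^sup>2" using kr B0 by (intro divide_right_mono mult_left_mono) auto
      also have "\<dots> = 60 / B" using B0 by (simp add: power2_eq_square field_simps)
      finally show ?thesis .
    qed
    finally have bad: "measure_pmf.prob (PP G q) {b. a \<le> \<bar>(\<Sum>l\<in>U. of_bool (\<forall>x\<in>T l. \<not> b x) :: real) - real (card U) * r\<bar>} \<le> 60 / B" .
    have sub: "UNIV - {b. a \<le> \<bar>(\<Sum>l\<in>U. of_bool (\<forall>x\<in>T l. \<not> b x) :: real) - real (card U) * r\<bar>} \<subseteq> E"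
    proof
      fix b assume "b \<in> UNIV - {b. a \<le> \<bar>(\<Sum>l\<in>U. of_bool (\<forall>x\<in>T l. \<not> b x) :: real) - real (card U) * r\<bar>}"
      then have h: "\<bar>(\<Sum>l\<in>U. of_bool (\<forall>x\<in>T l. \<not> b x) :: real) - real (card U) * r\<bar> < a" by auto
      have "(\<Sum>l\<in>U. of_bool (\<forall>x\<in>T l. \<not> b x) :: real) = real (card (U \<inter> {l. \<forall>x\<in>T l. \<not> b x}))"
        using finU by simp
      also have "U \<inter> {l. \<forall>x\<in>T l. \<not> b x} = {l\<in>U. \<forall>x\<in>T l. \<not> b x}" by auto
      finally have "real (card {l\<in>U. \<forall>x\<in>T l. \<not> b x}) < a + real (card U) * r" using h by linarith
      then have "real (card {l\<in>U. \<forall>x\<in>T l. \<not> b x}) \<le> B" using kr unfolding a_def by linarith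
      then show "b \<in> E" unfolding E_def by simp
    qed
    have "measure_pmf.prob (PP G q) (UNIV - {b. a \<le> \<bar>(\<Sum>l\<in>U. of_bool (\<forall>x\<in>T l. \<not> b x) :: real) - real (card U) * r\<bar>})
          = 1 - measure_pmf.prob (PP G q) {b. a \<le> \<bar>(\<Sum>l\<in>U. of_bool (\<forall>x\<in>T l. \<not> b x) :: real) - real (card U) * r\<bar>}"
      using measure_pmf.prob_compl[of _ "PP G q"] by simp
    moreover have "measure_pmf.prob (PP G q) (UNIV - {b. a \<le> \<bar>(\<Sum>l\<in>U. of_bool (\<forall>x\<in>T l. \<not> b x) :: real) - real (card U) * r\<bar>})
          \<le> measure_pmf.prob (PP G q) E"
      using sub by (intro measure_pmf.finite_measure_mono) auto
    ultimately show ?thesis using bad by linarith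
  qed
  then show ?thesis using probE by simp
qed




theorem lemma2p5:
  "\<exists>f :: nat \<Rightarrow> real. f \<longlonglongrightarrow> 1 \<and>
     (\<forall>p N j (t::real). 2 \<le> p \<longrightarrow> 0 < N \<longrightarrow> p dvd N \<longrightarrow> 1 \<le> j \<longrightarrow> 1 \<le> t \<longrightarrow>
        f p \<le> measure_pmf.prob (hp_step N p j)
          {(S, S'). real (card (unach N p S)) \<le> real p / (t * real (logstar (real p))) \<longrightarrow>
                    real (card (unach N p S')) \<le>
                      max (real p / (log 2 (real p) * real (logstar (real p))))
                          (real p / (t * 2 powr t * real (logstar (real p))))})"
proof (intro exI conjI allI impI)
  show "(\<lambda>p::nat. 1 - 60 * log 2 (real p) * (log 2 (real p) + 2) / real p) \<longlonglongrightarrow> 1"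
    by (rule lim_f)
next
  fix p N j :: nat and t :: real
  assume p2: "2 \<le> p" and N0: "0 < N" and dvd: "p dvd N" and j1: "1 \<le> j" and t1: "1 \<le> t"
  obtain m where "N = p * m" using dvd by (rule dvdE)
  then have Nm: "N = m * p" by (simp add: mult.commute)
  have m1: "1 \<le> m" using N0 Nm by (cases m) auto
  have p1: "1 \<le> p" using p2 by simp
  define L where "L = real (logstar (real p))"
  define B where "B = max (real p / (log 2 (real p) * L)) (real p / (t * 2 powr t * L))"
  have L1: "1 \<le> L" using logstar_bounds(1)[of "real p"] p2 unfolding L_def by simp
  have L2: "L \<le> log 2 (real p) + 2" using logstar_bounds(2)[of "real p"] p2 unfolding L_def by simp
  have lp: "1 \<le> log 2 (real p)" using p2 by (simp add: le_log_iff)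
  have Bge: "real p / (log 2 (real p) * L) \<le> B" unfolding B_def by simp
  have pos: "0 < real p / (log 2 (real p) * L)" using p2 lp L1 by (intro divide_pos_pos mult_pos_pos) auto
  have fB: "1 - 60 * log 2 (real p) * (log 2 (real p) + 2) / real p \<le> 1 - 60 / B"
  proof -
    have "60 / B \<le> 60 / (real p / (log 2 (real p) * L))"
    proof -
      have B0: "0 < B" using Bge pos by linarith
      have "0 < B * (real p / (log 2 (real p) * L))" using B0 pos by (rule mult_pos_pos)
      show ?thesis using pos Bge by (intro frac_le) auto
    qed
    also have "\<dots> = 60 * log 2 (real p) * L / real p" using p2 by (simp add: field_simps)
    also have "\<dots> \<le> 60 * log 2 (real p) * (log 2 (real p) + 2) / real p"
      using L2 lp p2 by (intro divide_right_mono mult_left_mono) auto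
    finally show ?thesis by simp
  qed
  let ?E = "{(S, S'). real (card (unach N p S)) \<le> real p / (t * real (logstar (real p))) \<longrightarrow>
                    real (card (unach N p S')) \<le>
                      max (real p / (log 2 (real p) * real (logstar (real p))))
                          (real p / (t * 2 powr t * real (logstar (real p))))}"
  show "1 - 60 * log 2 (real p) * (log 2 (real p) + 2) / real p \<le> measure_pmf.prob (hp_step N p j) ?E"
    unfolding hp_step_def
  proof (rule prob_bind_ge)
    fix S assume S: "S \<in> set_pmf (hp_state N p (j - 1))"
    have Ssub: "S \<subseteq> {1..m*p}" using state_support[OF m1 p1] S unfolding Nm by blast
    have "1 - 60 / B \<le> measure_pmf.prob (hp_round (m*p) p S)
           {S'. real (card (unach (m*p) p S)) \<le> real p / (t * real (logstar (real p))) \<longrightarrow>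
                real (card (unach (m*p) p S')) \<le> B}"
      by (rule round_bound[OF m1 p2 Ssub t1]) (simp add: B_def L_def)
    also have "\<dots> = measure_pmf.prob (map_pmf (\<lambda>S'. (S, S')) (hp_round N p S)) ?E"
      unfolding Nm B_def L_def by (simp add: vimage_def)
    finally show "1 - 60 * log 2 (real p) * (log 2 (real p) + 2) / real p \<le>
        measure_pmf.prob (map_pmf (\<lambda>S'. (S, S')) (hp_round N p S)) ?E" using fB by linarith
  qed
qed


end
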